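(* Let $\mathcal{H}$ be a hereditary $\sigma$-ring of sets, let $\mu^*$ be an outer measure on $\mathcal{H}$, let $X$ be a set with $X\cap\bigcup\mathcal{H}\neq\emptyset$, and let $\overline{\overline{S}}$ be the class of all $\mu^{**}$-measurable sets. If $A\in\mathcal{H}$ and $\{L_n\}_{n\ge1}$ is a disjoint sequence of sets in $\overline{\overline{S}}$ with $\bigcup_{n=1}^\infty L_n=L$, then $$\sup_{T\in\overline{\overline{S}}}\sum_{n=1}^\infty\mu^*(A\cap L_n\cap T)=\sum_{n=1}^\infty\sup_{T\in\overline{\overline{S}}}\mu^*(A\cap L_n\cap T).$$
   Context: A nonempty class $\mathcal{E}$ of sets is hereditary if $F\in\mathcal{E}$ whenever $E\in\mathcal{E}$ and $F\subseteq E$. A set $E\in\mathcal{H}$ is $\mu^*$-measurable if $\mu^*(A)=\mu^*(A\cap E)+\mu^*(A\cap E')$ for every $A\in\mathcal{H}$, where $E'$ denotes the complement of $E$. Let $\overline{S}$ denote the class of all $\mu^*$-measurable sets. Let $K=\{B\subseteq X: B\cap E\in\mathcal{H}\text{ for all }E\in\mathcal{H}\}$. A set $Q\in K$ is called $\mu^{**}$-measurable if $Q\cap E$ is $\mu^*$-measurable for every $\mu^*$-measurable $E\in\mathcal{H}$, i.e. for all $A\in\mathcal{H}$ and all $E\in\overline{S}$, $\mu^*(A)=\mu^*[A\cap(Q\cap E)]+\mu^*[A\cap(Q\cap E)']$. *)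

theory Defs
  imports "HOL-Analysis.Analysis"
begin

definition hereditary :: "'a set set \<Rightarrow> bool" where
  "hereditary \<E> \<longleftrightarrow> \<E> \<noteq> {} \<and> (\<forall>E\<in>\<E>. \<forall>F. F \<subseteq> E \<longrightarrow> F \<in> \<E>)"

definition sigma_ring_of_sets :: "'a set set \<Rightarrow> bool" where
  "sigma_ring_of_sets \<H> \<longleftrightarrow> \<H> \<noteq> {} \<and>
     (\<forall>E\<in>\<H>. \<forall>F\<in>\<H>. E - F \<in> \<H>) \<and>
     (\<forall>En::nat \<Rightarrow> 'a set. range En \<subseteq> \<H> \<longrightarrow> (\<Union>n. En n) \<in> \<H>)"

definition outer_measure_on :: "'a set set \<Rightarrow> ('a set \<Rightarrow> ennreal) \<Rightarrow> bool" where
  "outer_measure_on \<H> \<mu> \<longleftrightarrow> \<mu> {} = 0 \<and>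
     (\<forall>E\<in>\<H>. \<forall>F\<in>\<H>. E \<subseteq> F \<longrightarrow> \<mu> E \<le> \<mu> F) \<and>
     (\<forall>E (En::nat \<Rightarrow> 'a set). E \<in> \<H> \<longrightarrow> range En \<subseteq> \<H> \<longrightarrow> E \<subseteq> (\<Union>n. En n) \<longrightarrow>
         \<mu> E \<le> (\<Sum>n. \<mu> (En n)))"

(* the class S-bar of mu*-measurable sets (in H); A \<inter> E' written as A - E *)
definition mstar_measurable :: "'a set set \<Rightarrow> ('a set \<Rightarrow> ennreal) \<Rightarrow> 'a set set" where
  "mstar_measurable \<H> \<mu> =
     {E \<in> \<H>. \<forall>A\<in>\<H>. \<mu> A = \<mu> (A \<inter> E) + \<mu> (A - E)}"

definition Kclass :: "'a set set \<Rightarrow> 'a set \<Rightarrow> 'a set set" where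
  "Kclass \<H> X = {B. B \<subseteq> X \<and> (\<forall>E\<in>\<H>. B \<inter> E \<in> \<H>)}"

definition mstarstar_measurable :: "'a set set \<Rightarrow> ('a set \<Rightarrow> ennreal) \<Rightarrow> 'a set \<Rightarrow> 'a set set" where
  "mstarstar_measurable \<H> \<mu> X =
     {Q \<in> Kclass \<H> X. \<forall>A\<in>\<H>. \<forall>E\<in>mstar_measurable \<H> \<mu>.
         \<mu> A = \<mu> (A \<inter> (Q \<inter> E)) + \<mu> (A - (Q \<inter> E))}"

end

theory Submission
  imports Defs
begin

lemma her_sub: "hereditary H \<Longrightarrow> E \<in> H \<Longrightarrow> F \<subseteq> E \<Longrightarrow> F \<in> H"
  unfolding hereditary_def by blast

lemma ring_un:
  assumes "sigma_ring_of_sets H" "E \<in> H" "F \<in> H" shows "E \<union> F \<in> H"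
proof -
  let ?En = "\<lambda>n::nat. if n = 0 then E else F"
  have "range ?En \<subseteq> H" using assms by auto
  hence "(\<Union>n. ?En n) \<in> H" using assms(1) unfolding sigma_ring_of_sets_def by blast
  moreover have "(\<Union>n. ?En n) = E \<union> F"
  proof
    show "(\<Union>n. ?En n) \<subseteq> E \<union> F" by (auto split: if_splits)
    have "E \<subseteq> (\<Union>n. ?En n)" using UN_upper[of 0 UNIV ?En] by simp
    moreover have "F \<subseteq> (\<Union>n. ?En n)" using UN_upper[of 1 UNIV ?En] by simp
    ultimately show "E \<union> F \<subseteq> (\<Union>n. ?En n)" by blast
  qed
  ultimately show ?thesis by simp
qed

lemma meas_un:
  assumes her: "hereditary H" and sr: "sigma_ring_of_sets H"
    and E: "E \<in> mstar_measurable H \<mu>" and F: "F \<in> mstar_measurable H \<mu>"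
  shows "E \<union> F \<in> mstar_measurable H \<mu>"
proof -
  have EH: "E \<in> H" and FH: "F \<in> H" using E F unfolding mstar_measurable_def by auto
  have "E \<union> F \<in> H" using ring_un[OF sr EH FH] .
  moreover have "\<mu> B = \<mu> (B \<inter> (E \<union> F)) + \<mu> (B - (E \<union> F))" if B: "B \<in> H" for B
  proof -
    have h1: "B \<inter> (E \<union> F) \<in> H" using her_sub[OF her B] by blast
    have h2: "B - E \<in> H" using her_sub[OF her B] by blast
    have e1: "\<mu> (B \<inter> (E \<union> F)) = \<mu> (B \<inter> (E \<union> F) \<inter> E) + \<mu> (B \<inter> (E \<union> F) - E)"
      using E h1 unfolding mstar_measurable_def by blast
    have e2: "\<mu> (B - E) = \<mu> ((B - E) \<inter> F) + \<mu> ((B - E) - F)"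
      using F h2 unfolding mstar_measurable_def by blast
    have e3: "\<mu> B = \<mu> (B \<inter> E) + \<mu> (B - E)"
      using E B unfolding mstar_measurable_def by blast
    have a: "B \<inter> (E \<union> F) \<inter> E = B \<inter> E" by blast
    have b: "B \<inter> (E \<union> F) - E = (B - E) \<inter> F" by blast
    have c: "B - (E \<union> F) = (B - E) - F" by blast
    show ?thesis using e1 e2 e3 unfolding a b c by (simp add: add.assoc)
  qed
  ultimately show ?thesis unfolding mstar_measurable_def by blast
qed

lemma mm_un:
  assumes her: "hereditary H" and sr: "sigma_ring_of_sets H"
    and Q1: "Q1 \<in> mstarstar_measurable H \<mu> X" and Q2: "Q2 \<in> mstarstar_measurable H \<mu> X"
  shows "Q1 \<union> Q2 \<in> mstarstar_measurable H \<mu> X"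
proof -
  have K: "Q1 \<union> Q2 \<in> Kclass H X"
  proof -
    have "Q1 \<subseteq> X" "Q2 \<subseteq> X" using Q1 Q2 unfolding mstarstar_measurable_def Kclass_def by auto
    moreover have "(Q1 \<union> Q2) \<inter> E \<in> H" if "E \<in> H" for E
      using her_sub[OF her that, of "(Q1 \<union> Q2) \<inter> E"] by blast
    ultimately show ?thesis unfolding Kclass_def by blast
  qed
  have QE: "Q \<inter> E \<in> mstar_measurable H \<mu>"
    if Q: "Q \<in> mstarstar_measurable H \<mu> X" and E: "E \<in> mstar_measurable H \<mu>" for Q E
  proof -
    have "Q \<inter> E \<in> H" using Q E unfolding mstarstar_measurable_def Kclass_def mstar_measurable_def by blast
    thus ?thesis using Q E unfolding mstarstar_measurable_def mstar_measurable_def by blast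
  qed
  have "(Q1 \<union> Q2) \<inter> E \<in> mstar_measurable H \<mu>" if "E \<in> mstar_measurable H \<mu>" for E
  proof -
    have "(Q1 \<inter> E) \<union> (Q2 \<inter> E) \<in> mstar_measurable H \<mu>"
      using meas_un[OF her sr] that Q1 Q2 QE by blast
    moreover have "(Q1 \<union> Q2) \<inter> E = (Q1 \<inter> E) \<union> (Q2 \<inter> E)" by blast
    ultimately show ?thesis by simp
  qed
  then show ?thesis using K unfolding mstarstar_measurable_def mstar_measurable_def by blast
qed

theorem lemma3p3:
  fixes \<H> :: "'a set set" and \<mu> :: "'a set \<Rightarrow> ennreal" and X :: "'a set"
    and A L :: "'a set" and Ln :: "nat \<Rightarrow> 'a set"
  assumes "hereditary \<H>" and "sigma_ring_of_sets \<H>"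
    and "outer_measure_on \<H> \<mu>"
    and "X \<inter> \<Union>\<H> \<noteq> {}"
    and "A \<in> \<H>"
    and "range Ln \<subseteq> mstarstar_measurable \<H> \<mu> X"
    and "disjoint_family Ln"
    and "(\<Union>n. Ln n) = L"
  shows "(SUP T\<in>mstarstar_measurable \<H> \<mu> X. (\<Sum>n. \<mu> (A \<inter> Ln n \<inter> T)))
         = (\<Sum>n. (SUP T\<in>mstarstar_measurable \<H> \<mu> X. \<mu> (A \<inter> Ln n \<inter> T)))"
proof -
  let ?S = "mstarstar_measurable \<H> \<mu> X"
  have mono: "\<mu> (A \<inter> Ln n \<inter> T) \<le> \<mu> (A \<inter> Ln n)" for n T
  proof -
    have "A \<inter> Ln n \<inter> T \<in> \<H>" "A \<inter> Ln n \<in> \<H>"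
      by (rule her_sub[OF assms(1) assms(5)], blast)+
    thus ?thesis using assms(3) unfolding outer_measure_on_def by blast
  qed
  have supeq: "(SUP T\<in>?S. \<mu> (A \<inter> Ln n \<inter> T)) = \<mu> (A \<inter> Ln n)" for n
  proof (rule antisym)
    show "(SUP T\<in>?S. \<mu> (A \<inter> Ln n \<inter> T)) \<le> \<mu> (A \<inter> Ln n)" by (rule SUP_least) (rule mono)
    have "Ln n \<in> ?S" using assms(6) by auto
    moreover have "A \<inter> Ln n \<inter> Ln n = A \<inter> Ln n" by blast
    ultimately show "\<mu> (A \<inter> Ln n) \<le> (SUP T\<in>?S. \<mu> (A \<inter> Ln n \<inter> T))"
      by (metis SUP_upper)
  qed
  have unS: "(\<Union>n<Suc M. Ln n) \<in> ?S" for M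
  proof (induction M)
    case 0 then show ?case using assms(6) by (auto simp: lessThan_Suc)
  next
    case (Suc M)
    have "(\<Union>n<Suc (Suc M). Ln n) = (\<Union>n<Suc M. Ln n) \<union> Ln (Suc M)"
      by (auto simp: lessThan_Suc)
    moreover have "Ln (Suc M) \<in> ?S" using assms(6) by auto
    ultimately show ?case using mm_un[OF assms(1) assms(2) Suc] by simp
  qed
  show ?thesis unfolding supeq
  proof (rule antisym)
    show "(SUP T\<in>?S. (\<Sum>n. \<mu> (A \<inter> Ln n \<inter> T))) \<le> (\<Sum>n. \<mu> (A \<inter> Ln n))"
      by (rule SUP_least, rule suminf_le) (auto intro: mono)
    show "(\<Sum>n. \<mu> (A \<inter> Ln n)) \<le> (SUP T\<in>?S. (\<Sum>n. \<mu> (A \<inter> Ln n \<inter> T)))"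
    proof -
      have eq: "(\<Sum>n. \<mu> (A \<inter> Ln n)) = (SUP N. \<Sum>n<N. \<mu> (A \<inter> Ln n))"
        by (rule suminf_eq_SUP)
      show ?thesis unfolding eq
    proof (rule SUP_least)
      fix N
      show "(\<Sum>n<N. \<mu> (A \<inter> Ln n)) \<le> (SUP T\<in>?S. (\<Sum>n. \<mu> (A \<inter> Ln n \<inter> T)))"
      proof (cases N)
        case 0 then show ?thesis by simp
      next
        case (Suc M)
        let ?T = "\<Union>n<Suc M. Ln n"
        have "(\<Sum>n<N. \<mu> (A \<inter> Ln n)) = (\<Sum>n<N. \<mu> (A \<inter> Ln n \<inter> ?T))"
          by (rule sum.cong) (auto simp: Suc intro!: arg_cong[where f=\<mu>])
        also have "\<dots> \<le> (\<Sum>n. \<mu> (A \<inter> Ln n \<inter> ?T))"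
          by (rule sum_le_suminf) auto
        also have "\<dots> \<le> (SUP T\<in>?S. (\<Sum>n. \<mu> (A \<inter> Ln n \<inter> T)))"
          using unS[of M] by (rule SUP_upper)
        finally show ?thesis .
      qed
    qed
    qed
  qed
qed

end
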